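(* Let $\omega\in S_n$ avoid the pattern $231$. Then for any $i\neq j$ with $c_i(\omega),c_j(\omega)>0$, every element of $C_i(\omega)$ is incomparable with every element of $C_j(\omega)$; consequently $M_\omega$ is a disjoint union of the chains $C_i(\omega)$.
   Context: Permutations $\omega\in S_n$ are written in one-line notation. Let ${\rm Inv}(\omega)=\{(i,j): 1\le i<j\le n,\ \omega(i)>\omega(j)\}$, $c_i(\omega)=\#\{j: i<j\le n,\ \omega(i)>\omega(j)\}$, and for $i<j$, $c_{i,j}(\omega)=\#\{k: i<k<j,\ \omega(i)>\omega(k)\}$; $[m]=\{1,\dots,m\}$. For $i$ with $c_i(\omega)>0$ and $x\in[c_i(\omega)]$, $m_{i,x}(\omega)\in\mathbb{N}^n$ has $j$-th coordinate $0$ if $j<i$; $x$ if $j=i$; $0$ if $j>i$ and $(i,j)\in{\rm Inv}(\omega)$; $\max\{0,x-c_{i,j}(\omega)\}$ if $j>i$ and $(i,j)\notin{\rm Inv}(\omega)$. $M_\omega$ is the set of all $m_{i,x}(\omega)$ with the product order on $\mathbb{N}^n$, and $C_i(\omega)=\{m_{i,x}(\omega): x\in[c_i(\omega)]\}$ (a chain). $\omega$ avoids $231$ if there are no $i<j<l$ with $\omega(l)<\omega(i)<\omega(j)$. *)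

theory Defs
  imports "HOL-Combinatorics.Permutations"
begin

text \<open>A permutation w of S_n is a bijection of {1..n} (one-line notation w(1)...w(n)).
Vectors in N^n are functions nat => nat; only coordinates 1..n are relevant
(the vectors below are 0 outside {1..n}).\<close>

definition c_i :: "(nat \<Rightarrow> nat) \<Rightarrow> nat \<Rightarrow> nat \<Rightarrow> nat" where
  "c_i w n i = card {j. i < j \<and> j \<le> n \<and> w i > w j}"

definition c_ij :: "(nat \<Rightarrow> nat) \<Rightarrow> nat \<Rightarrow> nat \<Rightarrow> nat" where
  "c_ij w i j = card {k. i < k \<and> k < j \<and> w i > w k}"

definition m_vec :: "(nat \<Rightarrow> nat) \<Rightarrow> nat \<Rightarrow> nat \<Rightarrow> nat \<Rightarrow> (nat \<Rightarrow> nat)" where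
  "m_vec w n i x = (\<lambda>j. if j < i then 0
                         else if j = i then x
                         else if j \<le> n then
                           (if w i > w j then 0 else nat (max 0 (int x - int (c_ij w i j))))
                         else 0)"

definition C_chain :: "(nat \<Rightarrow> nat) \<Rightarrow> nat \<Rightarrow> nat \<Rightarrow> (nat \<Rightarrow> nat) set" where
  "C_chain w n i = {m_vec w n i x | x. x \<in> {1..c_i w n i}}"

definition M_set :: "(nat \<Rightarrow> nat) \<Rightarrow> nat \<Rightarrow> (nat \<Rightarrow> nat) set" where
  "M_set w n = {m_vec w n i x | i x. i \<in> {1..n} \<and> 0 < c_i w n i \<and> x \<in> {1..c_i w n i}}"

definition vec_le :: "nat \<Rightarrow> (nat \<Rightarrow> nat) \<Rightarrow> (nat \<Rightarrow> nat) \<Rightarrow> bool" where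
  "vec_le n a b = (\<forall>j\<in>{1..n}. a j \<le> b j)"

definition avoids_231 :: "(nat \<Rightarrow> nat) \<Rightarrow> nat \<Rightarrow> bool" where
  "avoids_231 w n = (\<not> (\<exists>i j l. 1 \<le> i \<and> i < j \<and> j < l \<and> l \<le> n \<and> w l < w i \<and> w i < w j))"

end

theory Submission
  imports Defs
begin

lemma key:
  assumes perm: "w permutes {1..n}" and av: "avoids_231 w n"
    and ij: "1 \<le> i" "i < j" "j \<le> n" and x: "1 \<le> x" "x \<le> c_i w n i" and y: "1 \<le> y"
  shows "\<not> vec_le n (m_vec w n i x) (m_vec w n j y) \<and> \<not> vec_le n (m_vec w n j y) (m_vec w n i x)"
proof
  have "m_vec w n i x i = x" "m_vec w n j y i = 0" using ij by (auto simp: m_vec_def)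
  then show "\<not> vec_le n (m_vec w n i x) (m_vec w n j y)"
    unfolding vec_le_def using ij x by (metis atLeastAtMost_iff le_trans less_imp_le_nat not_one_le_zero)
next
  have bj: "m_vec w n j y j = y" by (simp add: m_vec_def)
  have "m_vec w n i x j = 0"
  proof (cases "w i > w j")
    case True then show ?thesis using ij by (simp add: m_vec_def)
  next
    case False
    have "w i \<noteq> w j" using permutes_inj[OF perm] ij by (metis injD less_irrefl)
    with False have lt: "w i < w j" by simp
    have sub: "{k. i < k \<and> k \<le> n \<and> w i > w k} \<subseteq> {k. i < k \<and> k < j \<and> w i > w k}"
    proof
      fix k assume k: "k \<in> {k. i < k \<and> k \<le> n \<and> w i > w k}"
      have "\<not> j < k" using av ij k lt unfolding avoids_231_def by blast
      moreover have "k \<noteq> j" using k lt by auto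
      ultimately show "k \<in> {k. i < k \<and> k < j \<and> w i > w k}" using k by auto
    qed
    have "c_i w n i \<le> c_ij w i j" unfolding c_i_def c_ij_def
      by (rule card_mono[OF _ sub]) auto
    then show ?thesis using ij x lt by (simp add: m_vec_def)
  qed
  then show "\<not> vec_le n (m_vec w n j y) (m_vec w n i x)"
    unfolding vec_le_def using ij y bj by (metis atLeastAtMost_iff le_trans less_imp_le_nat not_one_le_zero)
qed

lemma incomp:
  assumes perm: "w permutes {1..n}" and av: "avoids_231 w n"
    and i: "i\<in>{1..n}" and j: "j\<in>{1..n}" and ne: "i \<noteq> j"
    and a: "a\<in>C_chain w n i" and b: "b\<in>C_chain w n j"
  shows "\<not> vec_le n a b \<and> \<not> vec_le n b a"
proof -
  obtain x where ax: "a = m_vec w n i x" "x \<in> {1..c_i w n i}" using a by (auto simp: C_chain_def)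
  obtain y where yb: "b = m_vec w n j y" "y \<in> {1..c_i w n j}" using b by (auto simp: C_chain_def)
  show ?thesis
  proof (cases "i < j")
    case True thus ?thesis using key[OF perm av, of i j x y] i j ax yb by auto
  next
    case False hence "j < i" using ne by simp
    thus ?thesis using key[OF perm av, of j i y x] i j ax yb by auto
  qed
qed

theorem mainTheorem2:
  fixes w :: "nat \<Rightarrow> nat" and n :: nat
  assumes "w permutes {1..n}"
    and "avoids_231 w n"
  shows "(\<forall>i\<in>{1..n}. \<forall>j\<in>{1..n}. i \<noteq> j \<and> 0 < c_i w n i \<and> 0 < c_i w n j \<longrightarrow>
            (\<forall>a\<in>C_chain w n i. \<forall>b\<in>C_chain w n j. \<not> vec_le n a b \<and> \<not> vec_le n b a))
         \<and> M_set w n = (\<Union>i\<in>{i\<in>{1..n}. 0 < c_i w n i}. C_chain w n i)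
         \<and> disjoint_family_on (C_chain w n) {i\<in>{1..n}. 0 < c_i w n i}"
proof (intro conjI)
  show "\<forall>i\<in>{1..n}. \<forall>j\<in>{1..n}. i \<noteq> j \<and> 0 < c_i w n i \<and> 0 < c_i w n j \<longrightarrow>
            (\<forall>a\<in>C_chain w n i. \<forall>b\<in>C_chain w n j. \<not> vec_le n a b \<and> \<not> vec_le n b a)"
    using incomp[OF assms] by blast
  show "M_set w n = (\<Union>i\<in>{i\<in>{1..n}. 0 < c_i w n i}. C_chain w n i)"
    unfolding M_set_def C_chain_def by blast
  show "disjoint_family_on (C_chain w n) {i\<in>{1..n}. 0 < c_i w n i}"
    unfolding disjoint_family_on_def
  proof (intro ballI impI)
    fix i j assume "i \<in> {i\<in>{1..n}. 0 < c_i w n i}" "j \<in> {i\<in>{1..n}. 0 < c_i w n i}" "i \<noteq> j"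
    moreover have "vec_le n a a" for a by (simp add: vec_le_def)
    ultimately show "C_chain w n i \<inter> C_chain w n j = {}"
      using incomp[OF assms, of i j] by blast
  qed
qed

end
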